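(* Let $u=u(x,y,z,t)$ be a smooth function with $u_x\neq 0$ satisfying \[ D_z\!\left(\frac{u_y}{u_x}\right)-D_x\!\left(\frac{u_t}{u_x}\right)=0. \qquad (\ast) \] Call a smooth function $U$ a symmetry of $(\ast)$ (at $u$) if it satisfies the linearized equation \[ \ell(U):=D_z\!\left(\frac{u_xU_y-u_yU_x}{u_x^2}\right)-D_x\!\left(\frac{u_xU_t-u_tU_x}{u_x^2}\right)=0 . \] Consider the relations, for an unknown function $\tilde U$, \[ \tilde{U}_z-\frac{u_{xz}}{u_x}\,\tilde{U}=U_t-\frac{u_t}{u_x}\,U_x,\qquad \tilde{U}_x-\frac{u_{xx}}{u_x}\,\tilde{U}=U_y-\frac{u_y}{u_x}\,U_x. \qquad (\ast\ast) \] Then these relations define a recursion operator for $(\ast)$, namely: (a) if $u$ satisfies $(\ast)$ and $U$ satisfies $\ell(U)=0$, then the system $(\ast\ast)$, regarded as an overdetermined first-order system for $\tilde U$, is compatible (its cross-differentiation compatibility condition holds identically by virtue of $(\ast)$, $\ell(U)=0$ and their differential consequences); and (b) if $u$ satisfies $(\ast)$, $U$ satisfies $\ell(U)=0$, and $\tilde U$ satisfies $(\ast\ast)$, then $\ell(\tilde U)=0$, i.e. $\tilde U$ is again a symmetry of $(\ast)$.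
   Context: Subscripts denote partial derivatives and $D_x,D_y,D_z,D_t$ denote total derivatives. The linearized equation $\ell(U)=0$ is obtained by replacing $u$ by $u+\varepsilon U$ in the left-hand side of $(\ast)$ and taking the coefficient of $\varepsilon$ (the linearization). Symmetries here may be nonlocal, i.e. $U,\tilde U$ are arbitrary smooth functions satisfying the stated equations. The equation $(\ast)$ admits the Lax pair $\psi_t=\lambda\psi_z+(u_t/u_x)\psi_x$, $\psi_y=(\lambda+u_y/u_x)\psi_x$ with spectral parameter $\lambda$. *)

theory Defs
  imports "HOL-Analysis.Analysis"
begin

type_synonym fun4 = "real \<Rightarrow> real \<Rightarrow> real \<Rightarrow> real \<Rightarrow> real"

text \<open>Partial derivatives of a function of (x,y,z,t). For a function of the
independent variables only, total and partial derivatives coincide.\<close>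
definition px :: "fun4 \<Rightarrow> fun4" where
  "px f = (\<lambda>x y z t. deriv (\<lambda>s. f s y z t) x)"
definition py :: "fun4 \<Rightarrow> fun4" where
  "py f = (\<lambda>x y z t. deriv (\<lambda>s. f x s z t) y)"
definition pz :: "fun4 \<Rightarrow> fun4" where
  "pz f = (\<lambda>x y z t. deriv (\<lambda>s. f x y s t) z)"
definition pt :: "fun4 \<Rightarrow> fun4" where
  "pt f = (\<lambda>x y z t. deriv (\<lambda>s. f x y z s) t)"

definition uncurry4 :: "fun4 \<Rightarrow> real \<times> real \<times> real \<times> real \<Rightarrow> real" where
  "uncurry4 f p = f (fst p) (fst (snd p)) (fst (snd (snd p))) (snd (snd (snd p)))"

inductive_set pderivs :: "fun4 \<Rightarrow> fun4 set" for f where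
  base: "f \<in> pderivs f"
| dx: "g \<in> pderivs f \<Longrightarrow> px g \<in> pderivs f"
| dy: "g \<in> pderivs f \<Longrightarrow> py g \<in> pderivs f"
| dz: "g \<in> pderivs f \<Longrightarrow> pz g \<in> pderivs f"
| dt: "g \<in> pderivs f \<Longrightarrow> pt g \<in> pderivs f"

definition smooth_on4 :: "(real \<times> real \<times> real \<times> real) set \<Rightarrow> fun4 \<Rightarrow> bool" where
  "smooth_on4 S f \<longleftrightarrow> (\<forall>g\<in>pderivs f. \<forall>p\<in>S. uncurry4 g differentiable (at p))"

definition eqn :: "fun4 \<Rightarrow> fun4" where
  "eqn u = (\<lambda>x y z t.
     pz (\<lambda>x y z t. py u x y z t / px u x y z t) x y z t
   - px (\<lambda>x y z t. pt u x y z t / px u x y z t) x y z t)"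

definition lin :: "fun4 \<Rightarrow> fun4 \<Rightarrow> fun4" where
  "lin u U = (\<lambda>x y z t.
     pz (\<lambda>x y z t. (px u x y z t * py U x y z t - py u x y z t * px U x y z t)
                      / (px u x y z t)^2) x y z t
   - px (\<lambda>x y z t. (px u x y z t * pt U x y z t - pt u x y z t * px U x y z t)
                      / (px u x y z t)^2) x y z t)"

text \<open>The system (**) written as  Ut~_z = cA*Ut~ + rA,  Ut~_x = cB*Ut~ + rB.\<close>
definition cA :: "fun4 \<Rightarrow> fun4" where
  "cA u = (\<lambda>x y z t. pz (px u) x y z t / px u x y z t)"
definition rA :: "fun4 \<Rightarrow> fun4 \<Rightarrow> fun4" where
  "rA u U = (\<lambda>x y z t. pt U x y z t - pt u x y z t / px u x y z t * px U x y z t)"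
definition cB :: "fun4 \<Rightarrow> fun4" where
  "cB u = (\<lambda>x y z t. px (px u) x y z t / px u x y z t)"
definition rB :: "fun4 \<Rightarrow> fun4 \<Rightarrow> fun4" where
  "rB u U = (\<lambda>x y z t. py U x y z t - py u x y z t / px u x y z t * px U x y z t)"

text \<open>Cross-differentiation compatibility expression of (**): D_x of the right-hand
side of the z-equation minus D_z of the right-hand side of the x-equation, where the
derivatives of the unknown (value W) are replaced using (**) itself.\<close>
definition compat :: "fun4 \<Rightarrow> fun4 \<Rightarrow> real \<Rightarrow> fun4" where
  "compat u U W = (\<lambda>x y z t.
      (px (cA u) x y z t * W + cA u x y z t * (cB u x y z t * W + rB u U x y z t)
         + px (rA u U) x y z t)
    - (pz (cB u) x y z t * W + cB u x y z t * (cA u x y z t * W + rA u U x y z t)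
         + pz (rB u U) x y z t))"

end

theory Submission
  imports Defs
begin


lemma pderivs_trans: "h \<in> pderivs g \<Longrightarrow> g \<in> pderivs f \<Longrightarrow> h \<in> pderivs f"
  by (induction h rule: pderivs.induct) (auto intro: pderivs.intros)

lemma smooth_sub: "smooth_on4 S f \<Longrightarrow> g \<in> pderivs f \<Longrightarrow> smooth_on4 S g"
  unfolding smooth_on4_def by (meson pderivs_trans)

lemma smooth_diff: "smooth_on4 S f \<Longrightarrow> g \<in> pderivs f \<Longrightarrow> p \<in> S \<Longrightarrow> uncurry4 g differentiable (at p)"
  unfolding smooth_on4_def by blast

lemma DX: assumes "smooth_on4 S f" "g \<in> pderivs f" "(x,y,z,t) \<in> S"
  shows "((\<lambda>s. g s y z t) has_real_derivative px g x y z t) (at x)"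
proof -
  have "uncurry4 g differentiable (at ((\<lambda>s. (s,y,z,t)) x))" using smooth_diff[OF assms] by simp
  moreover have "(\<lambda>s::real. (s,y,z,t)) differentiable (at x)" by (intro derivative_intros)
  ultimately have "(uncurry4 g \<circ> (\<lambda>s. (s,y,z,t))) differentiable (at x)"
    by (rule differentiable_chain_at[rotated])
  hence "(\<lambda>s. g s y z t) differentiable (at x)" by (simp add: o_def uncurry4_def)
  thus ?thesis unfolding px_def by (simp add: DERIV_deriv_iff_real_differentiable)
qed

lemma DY: assumes "smooth_on4 S f" "g \<in> pderivs f" "(x,y,z,t) \<in> S"
  shows "((\<lambda>s. g x s z t) has_real_derivative py g x y z t) (at y)"
proof -
  have "uncurry4 g differentiable (at ((\<lambda>s. (x,s,z,t)) y))" using smooth_diff[OF assms] by simp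
  moreover have "(\<lambda>s::real. (x,s,z,t)) differentiable (at y)" by (intro derivative_intros)
  ultimately have "(uncurry4 g \<circ> (\<lambda>s. (x,s,z,t))) differentiable (at y)"
    by (rule differentiable_chain_at[rotated])
  hence "(\<lambda>s. g x s z t) differentiable (at y)" by (simp add: o_def uncurry4_def)
  thus ?thesis unfolding py_def by (simp add: DERIV_deriv_iff_real_differentiable)
qed

lemma DZ: assumes "smooth_on4 S f" "g \<in> pderivs f" "(x,y,z,t) \<in> S"
  shows "((\<lambda>s. g x y s t) has_real_derivative pz g x y z t) (at z)"
proof -
  have "uncurry4 g differentiable (at ((\<lambda>s. (x,y,s,t)) z))" using smooth_diff[OF assms] by simp
  moreover have "(\<lambda>s::real. (x,y,s,t)) differentiable (at z)" by (intro derivative_intros)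
  ultimately have "(uncurry4 g \<circ> (\<lambda>s. (x,y,s,t))) differentiable (at z)"
    by (rule differentiable_chain_at[rotated])
  hence "(\<lambda>s. g x y s t) differentiable (at z)" by (simp add: o_def uncurry4_def)
  thus ?thesis unfolding pz_def by (simp add: DERIV_deriv_iff_real_differentiable)
qed

lemma DT: assumes "smooth_on4 S f" "g \<in> pderivs f" "(x,y,z,t) \<in> S"
  shows "((\<lambda>s. g x y z s) has_real_derivative pt g x y z t) (at t)"
proof -
  have "uncurry4 g differentiable (at ((\<lambda>s. (x,y,z,s)) t))" using smooth_diff[OF assms] by simp
  moreover have "(\<lambda>s::real. (x,y,z,s)) differentiable (at t)" by (intro derivative_intros)
  ultimately have "(uncurry4 g \<circ> (\<lambda>s. (x,y,z,s))) differentiable (at t)"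
    by (rule differentiable_chain_at[rotated])
  hence "(\<lambda>s. g x y z s) differentiable (at t)" by (simp add: o_def uncurry4_def)
  thus ?thesis unfolding pt_def by (simp add: DERIV_deriv_iff_real_differentiable)
qed

lemma px_of: "((\<lambda>s. F s y z t) has_real_derivative D) (at x) \<Longrightarrow> px F x y z t = D"
  unfolding px_def by (rule DERIV_imp_deriv)
lemma py_of: "((\<lambda>s. F x s z t) has_real_derivative D) (at y) \<Longrightarrow> py F x y z t = D"
  unfolding py_def by (rule DERIV_imp_deriv)
lemma pz_of: "((\<lambda>s. F x y s t) has_real_derivative D) (at z) \<Longrightarrow> pz F x y z t = D"
  unfolding pz_def by (rule DERIV_imp_deriv)
lemma pt_of: "((\<lambda>s. F x y z s) has_real_derivative D) (at t) \<Longrightarrow> pt F x y z t = D"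
  unfolding pt_def by (rule DERIV_imp_deriv)

lemma dist_pair_le: "dist (a, b) (c, d) \<le> dist a c + dist b d"
proof -
  have "sqrt ((dist a c)\<^sup>2 + (dist b d)\<^sup>2) \<le> sqrt ((dist a c + dist b d)^2)"
    by (intro real_sqrt_le_mono) (simp add: power2_sum)
  thus ?thesis by (simp add: dist_Pair_Pair)
qed

lemma box4: fixes x y z t :: real assumes "open S" "(x,y,z,t) \<in> S"
  shows "\<exists>d>0. \<forall>a b c e. \<bar>a - x\<bar> < d \<and> \<bar>b - y\<bar> < d \<and> \<bar>c - z\<bar> < d \<and> \<bar>e - t\<bar> < d \<longrightarrow> (a,b,c,e) \<in> S"
proof -
  obtain r where r: "r > 0" "ball (x,y,z,t) r \<subseteq> S" using assms open_contains_ball by blast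
  show ?thesis
  proof (intro exI[of _ "r/4"] conjI allI impI)
    show "r/4 > 0" using r by simp
    fix a b c e assume h: "\<bar>a - x\<bar> < r/4 \<and> \<bar>b - y\<bar> < r/4 \<and> \<bar>c - z\<bar> < r/4 \<and> \<bar>e - t\<bar> < r/4"
    have "dist (a,b,c,e) (x,y,z,t) \<le> dist a x + (dist b y + (dist c z + dist e t))"
      by (meson add_left_mono dist_pair_le order_trans)
    also have "\<dots> < r" using h by (simp add: dist_real_def)
    finally show "(a,b,c,e) \<in> S" using r by (auto simp: dist_commute)
  qed
qed

lemma ev_nhds: "d > 0 \<Longrightarrow> (\<And>s. \<bar>s - x\<bar> < d \<Longrightarrow> P s) \<Longrightarrow> eventually P (nhds (x::real))"
  unfolding eventually_nhds_metric by (auto simp: dist_real_def)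

lemma TX: fixes x y z t :: real assumes "open S" "\<forall>q\<in>S. uncurry4 F q = uncurry4 G q" "(x,y,z,t) \<in> S"
  shows "px F x y z t = px G x y z t"
proof -
  obtain d where d: "d > 0" "\<And>a b c e. \<bar>a - x\<bar> < d \<and> \<bar>b - y\<bar> < d \<and> \<bar>c - z\<bar> < d \<and> \<bar>e - t\<bar> < d \<Longrightarrow> (a,b,c,e) \<in> S"
    using box4[OF assms(1,3)] by blast
  have "eventually (\<lambda>s. F s y z t = G s y z t) (nhds x)"
    by (rule ev_nhds[OF d(1)]) (use assms(2) d(2) in \<open>force simp: uncurry4_def\<close>)
  thus ?thesis unfolding px_def by (intro deriv_cong_ev) auto
qed
lemma TY: fixes x y z t :: real assumes "open S" "\<forall>q\<in>S. uncurry4 F q = uncurry4 G q" "(x,y,z,t) \<in> S"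
  shows "py F x y z t = py G x y z t"
proof -
  obtain d where d: "d > 0" "\<And>a b c e. \<bar>a - x\<bar> < d \<and> \<bar>b - y\<bar> < d \<and> \<bar>c - z\<bar> < d \<and> \<bar>e - t\<bar> < d \<Longrightarrow> (a,b,c,e) \<in> S"
    using box4[OF assms(1,3)] by blast
  have "eventually (\<lambda>s. F x s z t = G x s z t) (nhds y)"
    by (rule ev_nhds[OF d(1)]) (use assms(2) d(2) in \<open>force simp: uncurry4_def\<close>)
  thus ?thesis unfolding py_def by (intro deriv_cong_ev) auto
qed
lemma TZ: fixes x y z t :: real assumes "open S" "\<forall>q\<in>S. uncurry4 F q = uncurry4 G q" "(x,y,z,t) \<in> S"
  shows "pz F x y z t = pz G x y z t"
proof -
  obtain d where d: "d > 0" "\<And>a b c e. \<bar>a - x\<bar> < d \<and> \<bar>b - y\<bar> < d \<and> \<bar>c - z\<bar> < d \<and> \<bar>e - t\<bar> < d \<Longrightarrow> (a,b,c,e) \<in> S"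
    using box4[OF assms(1,3)] by blast
  have "eventually (\<lambda>s. F x y s t = G x y s t) (nhds z)"
    by (rule ev_nhds[OF d(1)]) (use assms(2) d(2) in \<open>force simp: uncurry4_def\<close>)
  thus ?thesis unfolding pz_def by (intro deriv_cong_ev) auto
qed
lemma TT: fixes x y z t :: real assumes "open S" "\<forall>q\<in>S. uncurry4 F q = uncurry4 G q" "(x,y,z,t) \<in> S"
  shows "pt F x y z t = pt G x y z t"
proof -
  obtain d where d: "d > 0" "\<And>a b c e. \<bar>a - x\<bar> < d \<and> \<bar>b - y\<bar> < d \<and> \<bar>c - z\<bar> < d \<and> \<bar>e - t\<bar> < d \<Longrightarrow> (a,b,c,e) \<in> S"
    using box4[OF assms(1,3)] by blast
  have "eventually (\<lambda>s. F x y z s = G x y z s) (nhds t)"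
    by (rule ev_nhds[OF d(1)]) (use assms(2) d(2) in \<open>force simp: uncurry4_def\<close>)
  thus ?thesis unfolding pt_def by (intro deriv_cong_ev) auto
qed



lemma schwarz_key:
  fixes g g1 g2 g12 g21 :: "real \<Rightarrow> real \<Rightarrow> real"
  assumes h: "0 < h" "h < d"
  and D1: "\<And>s r. \<bar>s-x0\<bar> < d \<Longrightarrow> \<bar>r-y0\<bar> < d \<Longrightarrow> ((\<lambda>s. g s r) has_real_derivative g1 s r) (at s)"
  and D2: "\<And>s r. \<bar>s-x0\<bar> < d \<Longrightarrow> \<bar>r-y0\<bar> < d \<Longrightarrow> ((\<lambda>r. g s r) has_real_derivative g2 s r) (at r)"
  and D12: "\<And>s r. \<bar>s-x0\<bar> < d \<Longrightarrow> \<bar>r-y0\<bar> < d \<Longrightarrow> ((\<lambda>r. g1 s r) has_real_derivative g12 s r) (at r)"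
  and D21: "\<And>s r. \<bar>s-x0\<bar> < d \<Longrightarrow> \<bar>r-y0\<bar> < d \<Longrightarrow> ((\<lambda>s. g2 s r) has_real_derivative g21 s r) (at s)"
  shows "\<exists>a b c e. \<bar>a-x0\<bar> < d \<and> \<bar>b-y0\<bar> < d \<and> \<bar>c-x0\<bar> < d \<and> \<bar>e-y0\<bar> < d \<and>
           \<bar>a-x0\<bar> \<le> h \<and> \<bar>b-y0\<bar> \<le> h \<and> \<bar>c-x0\<bar> \<le> h \<and> \<bar>e-y0\<bar> \<le> h \<and> g12 a b = g21 c e"
proof -
  define \<Delta> where "\<Delta> = g (x0+h) (y0+h) - g (x0+h) y0 - g x0 (y0+h) + g x0 y0"
  have "x0 < x0 + h" "y0 < y0 + h" using h by auto
  obtain a where a: "x0 < a" "a < x0+h" "(g (x0+h) (y0+h) - g (x0+h) y0) - (g x0 (y0+h) - g x0 y0)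
      = ((x0+h) - x0) * (g1 a (y0+h) - g1 a y0)"
  proof -
    have "\<And>s. x0 \<le> s \<Longrightarrow> s \<le> x0+h \<Longrightarrow> ((\<lambda>s. g s (y0+h) - g s y0) has_real_derivative (g1 s (y0+h) - g1 s y0)) (at s)"
      using h by (intro DERIV_diff D1) auto
    from MVT2[OF \<open>x0 < x0 + h\<close> this] show ?thesis using that by auto
  qed
  obtain b where b: "y0 < b" "b < y0+h" "g1 a (y0+h) - g1 a y0 = ((y0+h) - y0) * g12 a b"
  proof -
    have "\<And>r. y0 \<le> r \<Longrightarrow> r \<le> y0+h \<Longrightarrow> ((\<lambda>r. g1 a r) has_real_derivative g12 a r) (at r)"
      using h a by (intro D12) auto
    from MVT2[OF \<open>y0 < y0 + h\<close> this] show ?thesis using that by auto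
  qed
  obtain e where e: "y0 < e" "e < y0+h" "(g (x0+h) (y0+h) - g x0 (y0+h)) - (g (x0+h) y0 - g x0 y0)
      = ((y0+h) - y0) * (g2 (x0+h) e - g2 x0 e)"
  proof -
    have "\<And>r. y0 \<le> r \<Longrightarrow> r \<le> y0+h \<Longrightarrow> ((\<lambda>r. g (x0+h) r - g x0 r) has_real_derivative (g2 (x0+h) r - g2 x0 r)) (at r)"
      using h by (intro DERIV_diff D2) auto
    from MVT2[OF \<open>y0 < y0 + h\<close> this] show ?thesis using that by auto
  qed
  obtain c where c: "x0 < c" "c < x0+h" "g2 (x0+h) e - g2 x0 e = ((x0+h) - x0) * g21 c e"
  proof -
    have "\<And>s. x0 \<le> s \<Longrightarrow> s \<le> x0+h \<Longrightarrow> ((\<lambda>s. g2 s e) has_real_derivative g21 s e) (at s)"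
      using h e by (intro D21) auto
    from MVT2[OF \<open>x0 < x0 + h\<close> this] show ?thesis using that by auto
  qed
  have 1: "h * (g1 a (y0+h) - g1 a y0) = h * (g2 (x0+h) e - g2 x0 e)"
    using a(3) e(3) by (simp only: add_diff_cancel_left')
  have "h * (h * g12 a b) = h * (h * g21 c e)" using 1 b(3) c(3) by simp
  hence "g12 a b = g21 c e" using h by simp
  thus ?thesis using a b c e h by (intro exI[of _ a] exI[of _ b] exI[of _ c] exI[of _ e]) auto
qed



lemma tri_contra: "\<bar>D::real\<bar> \<le> A + B \<Longrightarrow> A < \<bar>D\<bar> / 2 \<Longrightarrow> B < \<bar>D\<bar>/2 \<Longrightarrow> False"
  by linarith

lemma schwarz2:
  fixes g ga gb gab gba :: "real \<Rightarrow> real \<Rightarrow> real"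
  assumes d: "0 < d"
  and D1: "\<And>s r. \<bar>s-xa\<bar> < d \<Longrightarrow> \<bar>r-ya\<bar> < d \<Longrightarrow> ((\<lambda>s. g s r) has_real_derivative ga s r) (at s)"
  and D2: "\<And>s r. \<bar>s-xa\<bar> < d \<Longrightarrow> \<bar>r-ya\<bar> < d \<Longrightarrow> ((\<lambda>r. g s r) has_real_derivative gb s r) (at r)"
  and D12: "\<And>s r. \<bar>s-xa\<bar> < d \<Longrightarrow> \<bar>r-ya\<bar> < d \<Longrightarrow> ((\<lambda>r. ga s r) has_real_derivative gab s r) (at r)"
  and D21: "\<And>s r. \<bar>s-xa\<bar> < d \<Longrightarrow> \<bar>r-ya\<bar> < d \<Longrightarrow> ((\<lambda>s. gb s r) has_real_derivative gba s r) (at s)"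
  and C12: "continuous (at (xa,ya)) (\<lambda>q. gab (fst q) (snd q))"
  and C21: "continuous (at (xa,ya)) (\<lambda>q. gba (fst q) (snd q))"
  shows "gab xa ya = gba xa ya"
proof (rule ccontr)
  assume ne: "gab xa ya \<noteq> gba xa ya"
  define \<epsilon> where "\<epsilon> = \<bar>gab xa ya - gba xa ya\<bar> / 2"
  have ep: "\<epsilon> > 0" using ne by (simp add: \<epsilon>_def)
  obtain d1 where d1: "d1 > 0" "\<And>q. dist q (xa,ya) < d1 \<Longrightarrow> dist (gab (fst q) (snd q)) (gab xa ya) < \<epsilon>"
    using C12 ep unfolding continuous_at_eps_delta by force
  obtain d2 where d2: "d2 > 0" "\<And>q. dist q (xa,ya) < d2 \<Longrightarrow> dist (gba (fst q) (snd q)) (gba xa ya) < \<epsilon>"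
    using C21 ep unfolding continuous_at_eps_delta by force
  define h where "h = min d (min d1 d2) / 3"
  have h: "0 < h" "h < d" using d d1 d2 by (auto simp: h_def)
  obtain a b c e where abce: "\<bar>a-xa\<bar> \<le> h" "\<bar>b-ya\<bar> \<le> h" "\<bar>c-xa\<bar> \<le> h" "\<bar>e-ya\<bar> \<le> h" "gab a b = gba c e"
    using schwarz_key[OF h D1 D2 D12 D21] by blast
  have "dist (a,b) (xa,ya) \<le> dist a xa + dist b ya" by (rule dist_pair_le)
  also have "\<dots> < d1" using abce h d1 unfolding h_def dist_real_def by linarith
  finally have 1: "dist (gab a b) (gab xa ya) < \<epsilon>" using d1(2)[of "(a,b)"] by simp
  have "dist (c,e) (xa,ya) \<le> dist c xa + dist e ya" by (rule dist_pair_le)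
  also have "\<dots> < d2" using abce h d2 unfolding h_def dist_real_def by linarith
  finally have 2: "dist (gba c e) (gba xa ya) < \<epsilon>" using d2(2)[of "(c,e)"] by simp
  have eq: "gab xa ya - gba xa ya = (gba c e - gba xa ya) - (gab a b - gab xa ya)" using abce(5) by simp
  have "\<bar>gab xa ya - gba xa ya\<bar> \<le> \<bar>gba c e - gba xa ya\<bar> + \<bar>gab a b - gab xa ya\<bar>"
    unfolding eq by (rule abs_triangle_ineq4)
  from tri_contra[OF this] show False using 1 2 unfolding \<epsilon>_def dist_real_def by blast
qed
lemma sch_xy: fixes x y z t :: real
  assumes S: "open S" and f: "smooth_on4 S f" and p: "(x,y,z,t) \<in> S"
  shows "py (px f) x y z t = px (py f) x y z t"
proof -
  obtain d where d: "d > 0" "\<And>a b c e. \<bar>a - x\<bar> < d \<and> \<bar>b - y\<bar> < d \<and> \<bar>c - z\<bar> < d \<and> \<bar>e - t\<bar> < d \<Longrightarrow> (a,b,c,e) \<in> S"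
    using box4[OF S p] by blast
  have mem: "\<And>s r. \<bar>s - x\<bar> < d \<Longrightarrow> \<bar>r - y\<bar> < d \<Longrightarrow> (s,r,z,t) \<in> S"
    using d by auto
  have C: "\<And>g. g \<in> pderivs f \<Longrightarrow> continuous (at (x,y)) (\<lambda>q. g (fst q) (snd q) z t)"
  proof -
    fix g assume g: "g \<in> pderivs f"
    have "uncurry4 g differentiable (at ((\<lambda>q. (fst q,snd q,z,t)) (x,y)))"
      using smooth_diff[OF f g p] by simp
    hence "continuous (at ((\<lambda>q. (fst q,snd q,z,t)) (x,y))) (uncurry4 g)"
      by (rule differentiable_imp_continuous_within)
    hence "continuous (at (x,y)) (uncurry4 g \<circ> (\<lambda>q. (fst q,snd q,z,t)))"
      by (intro continuous_at_compose continuous_intros)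
    thus "continuous (at (x,y)) (\<lambda>q. g (fst q) (snd q) z t)"
      by (simp add: o_def uncurry4_def)
  qed
  show ?thesis
  proof (rule schwarz2[where g="\<lambda>s r. f s r z t" and ga="\<lambda>s r. px f s r z t"
      and gb="\<lambda>s r. py f s r z t" and gab="\<lambda>s r. py (px f) s r z t"
      and gba="\<lambda>s r. px (py f) s r z t" and d=d and xa=x and ya=y])
    show "0 < d" by (rule d(1))
    fix s r assume sr: "\<bar>s - x\<bar> < d" "\<bar>r - y\<bar> < d"
    show "((\<lambda>s. f s r z t) has_real_derivative px f s r z t) (at s)"
      by (rule DX[OF f pderivs.base mem[OF sr]])
    show "((\<lambda>r. f s r z t) has_real_derivative py f s r z t) (at r)"
      by (rule DY[OF f pderivs.base mem[OF sr]])
    show "((\<lambda>r. px f s r z t) has_real_derivative py (px f) s r z t) (at r)"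
      by (rule DY[OF f _ mem[OF sr]]) (intro pderivs.intros)
    show "((\<lambda>s. py f s r z t) has_real_derivative px (py f) s r z t) (at s)"
      by (rule DX[OF f _ mem[OF sr]]) (intro pderivs.intros)
  next
    show "continuous (at (x,y)) (\<lambda>q. py (px f) (fst q) (snd q) z t)"
      by (rule C) (intro pderivs.intros)
    show "continuous (at (x,y)) (\<lambda>q. px (py f) (fst q) (snd q) z t)"
      by (rule C) (intro pderivs.intros)
  qed
qed

lemma sch_xz: fixes x y z t :: real
  assumes S: "open S" and f: "smooth_on4 S f" and p: "(x,y,z,t) \<in> S"
  shows "pz (px f) x y z t = px (pz f) x y z t"
proof -
  obtain d where d: "d > 0" "\<And>a b c e. \<bar>a - x\<bar> < d \<and> \<bar>b - y\<bar> < d \<and> \<bar>c - z\<bar> < d \<and> \<bar>e - t\<bar> < d \<Longrightarrow> (a,b,c,e) \<in> S"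
    using box4[OF S p] by blast
  have mem: "\<And>s r. \<bar>s - x\<bar> < d \<Longrightarrow> \<bar>r - z\<bar> < d \<Longrightarrow> (s,y,r,t) \<in> S"
    using d by auto
  have C: "\<And>g. g \<in> pderivs f \<Longrightarrow> continuous (at (x,z)) (\<lambda>q. g (fst q) y (snd q) t)"
  proof -
    fix g assume g: "g \<in> pderivs f"
    have "uncurry4 g differentiable (at ((\<lambda>q. (fst q,y,snd q,t)) (x,z)))"
      using smooth_diff[OF f g p] by simp
    hence "continuous (at ((\<lambda>q. (fst q,y,snd q,t)) (x,z))) (uncurry4 g)"
      by (rule differentiable_imp_continuous_within)
    hence "continuous (at (x,z)) (uncurry4 g \<circ> (\<lambda>q. (fst q,y,snd q,t)))"
      by (intro continuous_at_compose continuous_intros)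
    thus "continuous (at (x,z)) (\<lambda>q. g (fst q) y (snd q) t)"
      by (simp add: o_def uncurry4_def)
  qed
  show ?thesis
  proof (rule schwarz2[where g="\<lambda>s r. f s y r t" and ga="\<lambda>s r. px f s y r t"
      and gb="\<lambda>s r. pz f s y r t" and gab="\<lambda>s r. pz (px f) s y r t"
      and gba="\<lambda>s r. px (pz f) s y r t" and d=d and xa=x and ya=z])
    show "0 < d" by (rule d(1))
    fix s r assume sr: "\<bar>s - x\<bar> < d" "\<bar>r - z\<bar> < d"
    show "((\<lambda>s. f s y r t) has_real_derivative px f s y r t) (at s)"
      by (rule DX[OF f pderivs.base mem[OF sr]])
    show "((\<lambda>r. f s y r t) has_real_derivative pz f s y r t) (at r)"
      by (rule DZ[OF f pderivs.base mem[OF sr]])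
    show "((\<lambda>r. px f s y r t) has_real_derivative pz (px f) s y r t) (at r)"
      by (rule DZ[OF f _ mem[OF sr]]) (intro pderivs.intros)
    show "((\<lambda>s. pz f s y r t) has_real_derivative px (pz f) s y r t) (at s)"
      by (rule DX[OF f _ mem[OF sr]]) (intro pderivs.intros)
  next
    show "continuous (at (x,z)) (\<lambda>q. pz (px f) (fst q) y (snd q) t)"
      by (rule C) (intro pderivs.intros)
    show "continuous (at (x,z)) (\<lambda>q. px (pz f) (fst q) y (snd q) t)"
      by (rule C) (intro pderivs.intros)
  qed
qed

lemma sch_xt: fixes x y z t :: real
  assumes S: "open S" and f: "smooth_on4 S f" and p: "(x,y,z,t) \<in> S"
  shows "pt (px f) x y z t = px (pt f) x y z t"
proof -
  obtain d where d: "d > 0" "\<And>a b c e. \<bar>a - x\<bar> < d \<and> \<bar>b - y\<bar> < d \<and> \<bar>c - z\<bar> < d \<and> \<bar>e - t\<bar> < d \<Longrightarrow> (a,b,c,e) \<in> S"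
    using box4[OF S p] by blast
  have mem: "\<And>s r. \<bar>s - x\<bar> < d \<Longrightarrow> \<bar>r - t\<bar> < d \<Longrightarrow> (s,y,z,r) \<in> S"
    using d by auto
  have C: "\<And>g. g \<in> pderivs f \<Longrightarrow> continuous (at (x,t)) (\<lambda>q. g (fst q) y z (snd q))"
  proof -
    fix g assume g: "g \<in> pderivs f"
    have "uncurry4 g differentiable (at ((\<lambda>q. (fst q,y,z,snd q)) (x,t)))"
      using smooth_diff[OF f g p] by simp
    hence "continuous (at ((\<lambda>q. (fst q,y,z,snd q)) (x,t))) (uncurry4 g)"
      by (rule differentiable_imp_continuous_within)
    hence "continuous (at (x,t)) (uncurry4 g \<circ> (\<lambda>q. (fst q,y,z,snd q)))"
      by (intro continuous_at_compose continuous_intros)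
    thus "continuous (at (x,t)) (\<lambda>q. g (fst q) y z (snd q))"
      by (simp add: o_def uncurry4_def)
  qed
  show ?thesis
  proof (rule schwarz2[where g="\<lambda>s r. f s y z r" and ga="\<lambda>s r. px f s y z r"
      and gb="\<lambda>s r. pt f s y z r" and gab="\<lambda>s r. pt (px f) s y z r"
      and gba="\<lambda>s r. px (pt f) s y z r" and d=d and xa=x and ya=t])
    show "0 < d" by (rule d(1))
    fix s r assume sr: "\<bar>s - x\<bar> < d" "\<bar>r - t\<bar> < d"
    show "((\<lambda>s. f s y z r) has_real_derivative px f s y z r) (at s)"
      by (rule DX[OF f pderivs.base mem[OF sr]])
    show "((\<lambda>r. f s y z r) has_real_derivative pt f s y z r) (at r)"
      by (rule DT[OF f pderivs.base mem[OF sr]])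
    show "((\<lambda>r. px f s y z r) has_real_derivative pt (px f) s y z r) (at r)"
      by (rule DT[OF f _ mem[OF sr]]) (intro pderivs.intros)
    show "((\<lambda>s. pt f s y z r) has_real_derivative px (pt f) s y z r) (at s)"
      by (rule DX[OF f _ mem[OF sr]]) (intro pderivs.intros)
  next
    show "continuous (at (x,t)) (\<lambda>q. pt (px f) (fst q) y z (snd q))"
      by (rule C) (intro pderivs.intros)
    show "continuous (at (x,t)) (\<lambda>q. px (pt f) (fst q) y z (snd q))"
      by (rule C) (intro pderivs.intros)
  qed
qed

lemma sch_yz: fixes x y z t :: real
  assumes S: "open S" and f: "smooth_on4 S f" and p: "(x,y,z,t) \<in> S"
  shows "pz (py f) x y z t = py (pz f) x y z t"
proof -
  obtain d where d: "d > 0" "\<And>a b c e. \<bar>a - x\<bar> < d \<and> \<bar>b - y\<bar> < d \<and> \<bar>c - z\<bar> < d \<and> \<bar>e - t\<bar> < d \<Longrightarrow> (a,b,c,e) \<in> S"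
    using box4[OF S p] by blast
  have mem: "\<And>s r. \<bar>s - y\<bar> < d \<Longrightarrow> \<bar>r - z\<bar> < d \<Longrightarrow> (x,s,r,t) \<in> S"
    using d by auto
  have C: "\<And>g. g \<in> pderivs f \<Longrightarrow> continuous (at (y,z)) (\<lambda>q. g x (fst q) (snd q) t)"
  proof -
    fix g assume g: "g \<in> pderivs f"
    have "uncurry4 g differentiable (at ((\<lambda>q. (x,fst q,snd q,t)) (y,z)))"
      using smooth_diff[OF f g p] by simp
    hence "continuous (at ((\<lambda>q. (x,fst q,snd q,t)) (y,z))) (uncurry4 g)"
      by (rule differentiable_imp_continuous_within)
    hence "continuous (at (y,z)) (uncurry4 g \<circ> (\<lambda>q. (x,fst q,snd q,t)))"
      by (intro continuous_at_compose continuous_intros)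
    thus "continuous (at (y,z)) (\<lambda>q. g x (fst q) (snd q) t)"
      by (simp add: o_def uncurry4_def)
  qed
  show ?thesis
  proof (rule schwarz2[where g="\<lambda>s r. f x s r t" and ga="\<lambda>s r. py f x s r t"
      and gb="\<lambda>s r. pz f x s r t" and gab="\<lambda>s r. pz (py f) x s r t"
      and gba="\<lambda>s r. py (pz f) x s r t" and d=d and xa=y and ya=z])
    show "0 < d" by (rule d(1))
    fix s r assume sr: "\<bar>s - y\<bar> < d" "\<bar>r - z\<bar> < d"
    show "((\<lambda>s. f x s r t) has_real_derivative py f x s r t) (at s)"
      by (rule DY[OF f pderivs.base mem[OF sr]])
    show "((\<lambda>r. f x s r t) has_real_derivative pz f x s r t) (at r)"
      by (rule DZ[OF f pderivs.base mem[OF sr]])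
    show "((\<lambda>r. py f x s r t) has_real_derivative pz (py f) x s r t) (at r)"
      by (rule DZ[OF f _ mem[OF sr]]) (intro pderivs.intros)
    show "((\<lambda>s. pz f x s r t) has_real_derivative py (pz f) x s r t) (at s)"
      by (rule DY[OF f _ mem[OF sr]]) (intro pderivs.intros)
  next
    show "continuous (at (y,z)) (\<lambda>q. pz (py f) x (fst q) (snd q) t)"
      by (rule C) (intro pderivs.intros)
    show "continuous (at (y,z)) (\<lambda>q. py (pz f) x (fst q) (snd q) t)"
      by (rule C) (intro pderivs.intros)
  qed
qed

lemma sch_yt: fixes x y z t :: real
  assumes S: "open S" and f: "smooth_on4 S f" and p: "(x,y,z,t) \<in> S"
  shows "pt (py f) x y z t = py (pt f) x y z t"
proof -
  obtain d where d: "d > 0" "\<And>a b c e. \<bar>a - x\<bar> < d \<and> \<bar>b - y\<bar> < d \<and> \<bar>c - z\<bar> < d \<and> \<bar>e - t\<bar> < d \<Longrightarrow> (a,b,c,e) \<in> S"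
    using box4[OF S p] by blast
  have mem: "\<And>s r. \<bar>s - y\<bar> < d \<Longrightarrow> \<bar>r - t\<bar> < d \<Longrightarrow> (x,s,z,r) \<in> S"
    using d by auto
  have C: "\<And>g. g \<in> pderivs f \<Longrightarrow> continuous (at (y,t)) (\<lambda>q. g x (fst q) z (snd q))"
  proof -
    fix g assume g: "g \<in> pderivs f"
    have "uncurry4 g differentiable (at ((\<lambda>q. (x,fst q,z,snd q)) (y,t)))"
      using smooth_diff[OF f g p] by simp
    hence "continuous (at ((\<lambda>q. (x,fst q,z,snd q)) (y,t))) (uncurry4 g)"
      by (rule differentiable_imp_continuous_within)
    hence "continuous (at (y,t)) (uncurry4 g \<circ> (\<lambda>q. (x,fst q,z,snd q)))"
      by (intro continuous_at_compose continuous_intros)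
    thus "continuous (at (y,t)) (\<lambda>q. g x (fst q) z (snd q))"
      by (simp add: o_def uncurry4_def)
  qed
  show ?thesis
  proof (rule schwarz2[where g="\<lambda>s r. f x s z r" and ga="\<lambda>s r. py f x s z r"
      and gb="\<lambda>s r. pt f x s z r" and gab="\<lambda>s r. pt (py f) x s z r"
      and gba="\<lambda>s r. py (pt f) x s z r" and d=d and xa=y and ya=t])
    show "0 < d" by (rule d(1))
    fix s r assume sr: "\<bar>s - y\<bar> < d" "\<bar>r - t\<bar> < d"
    show "((\<lambda>s. f x s z r) has_real_derivative py f x s z r) (at s)"
      by (rule DY[OF f pderivs.base mem[OF sr]])
    show "((\<lambda>r. f x s z r) has_real_derivative pt f x s z r) (at r)"
      by (rule DT[OF f pderivs.base mem[OF sr]])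
    show "((\<lambda>r. py f x s z r) has_real_derivative pt (py f) x s z r) (at r)"
      by (rule DT[OF f _ mem[OF sr]]) (intro pderivs.intros)
    show "((\<lambda>s. pt f x s z r) has_real_derivative py (pt f) x s z r) (at s)"
      by (rule DY[OF f _ mem[OF sr]]) (intro pderivs.intros)
  next
    show "continuous (at (y,t)) (\<lambda>q. pt (py f) x (fst q) z (snd q))"
      by (rule C) (intro pderivs.intros)
    show "continuous (at (y,t)) (\<lambda>q. py (pt f) x (fst q) z (snd q))"
      by (rule C) (intro pderivs.intros)
  qed
qed

lemma sch_zt: fixes x y z t :: real
  assumes S: "open S" and f: "smooth_on4 S f" and p: "(x,y,z,t) \<in> S"
  shows "pt (pz f) x y z t = pz (pt f) x y z t"
proof -
  obtain d where d: "d > 0" "\<And>a b c e. \<bar>a - x\<bar> < d \<and> \<bar>b - y\<bar> < d \<and> \<bar>c - z\<bar> < d \<and> \<bar>e - t\<bar> < d \<Longrightarrow> (a,b,c,e) \<in> S"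
    using box4[OF S p] by blast
  have mem: "\<And>s r. \<bar>s - z\<bar> < d \<Longrightarrow> \<bar>r - t\<bar> < d \<Longrightarrow> (x,y,s,r) \<in> S"
    using d by auto
  have C: "\<And>g. g \<in> pderivs f \<Longrightarrow> continuous (at (z,t)) (\<lambda>q. g x y (fst q) (snd q))"
  proof -
    fix g assume g: "g \<in> pderivs f"
    have "uncurry4 g differentiable (at ((\<lambda>q. (x,y,fst q,snd q)) (z,t)))"
      using smooth_diff[OF f g p] by simp
    hence "continuous (at ((\<lambda>q. (x,y,fst q,snd q)) (z,t))) (uncurry4 g)"
      by (rule differentiable_imp_continuous_within)
    hence "continuous (at (z,t)) (uncurry4 g \<circ> (\<lambda>q. (x,y,fst q,snd q)))"
      by (intro continuous_at_compose continuous_intros)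
    thus "continuous (at (z,t)) (\<lambda>q. g x y (fst q) (snd q))"
      by (simp add: o_def uncurry4_def)
  qed
  show ?thesis
  proof (rule schwarz2[where g="\<lambda>s r. f x y s r" and ga="\<lambda>s r. pz f x y s r"
      and gb="\<lambda>s r. pt f x y s r" and gab="\<lambda>s r. pt (pz f) x y s r"
      and gba="\<lambda>s r. pz (pt f) x y s r" and d=d and xa=z and ya=t])
    show "0 < d" by (rule d(1))
    fix s r assume sr: "\<bar>s - z\<bar> < d" "\<bar>r - t\<bar> < d"
    show "((\<lambda>s. f x y s r) has_real_derivative pz f x y s r) (at s)"
      by (rule DZ[OF f pderivs.base mem[OF sr]])
    show "((\<lambda>r. f x y s r) has_real_derivative pt f x y s r) (at r)"
      by (rule DT[OF f pderivs.base mem[OF sr]])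
    show "((\<lambda>r. pz f x y s r) has_real_derivative pt (pz f) x y s r) (at r)"
      by (rule DT[OF f _ mem[OF sr]]) (intro pderivs.intros)
    show "((\<lambda>s. pt f x y s r) has_real_derivative pz (pt f) x y s r) (at s)"
      by (rule DZ[OF f _ mem[OF sr]]) (intro pderivs.intros)
  next
    show "continuous (at (z,t)) (\<lambda>q. pt (pz f) x y (fst q) (snd q))"
      by (rule C) (intro pderivs.intros)
    show "continuous (at (z,t)) (\<lambda>q. pz (pt f) x y (fst q) (snd q))"
      by (rule C) (intro pderivs.intros)
  qed
qed



definition FE :: "fun4 \<Rightarrow> fun4" where
  "FE u = (\<lambda>x y z t. (pz (py u) x y z t * px u x y z t - py u x y z t * pz (px u) x y z t) / (px u x y z t)^2
                  - (px (pt u) x y z t * px u x y z t - pt u x y z t * px (px u) x y z t) / (px u x y z t)^2)"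
definition GA :: "fun4 \<Rightarrow> fun4 \<Rightarrow> fun4 \<Rightarrow> fun4" where
  "GA u U V = (\<lambda>x y z t. cA u x y z t * V x y z t + rA u U x y z t)"
definition GB :: "fun4 \<Rightarrow> fun4 \<Rightarrow> fun4 \<Rightarrow> fun4" where
  "GB u U V = (\<lambda>x y z t. cB u x y z t * V x y z t + rB u U x y z t)"

lemma c_pxcA:
  fixes x y z t :: real
  assumes u: "smooth_on4 S u" and p: "(x,y,z,t) \<in> S" and nz: "px u x y z t \<noteq> 0"
  shows "px (cA u) x y z t = ((px (pz (px u))) x y z t * (px u) x y z t - (pz (px u)) x y z t * (px (px u)) x y z t) / ((px u) x y z t)^2"
proof -
  have du0: "((\<lambda>s. (pz (px u)) s y z t) has_real_derivative px (pz (px u)) x y z t) (at x)"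
    by (rule DX[OF u _ p]) (intro pderivs.intros)
  have du1: "((\<lambda>s. (px u) s y z t) has_real_derivative px (px u) x y z t) (at x)"
    by (rule DX[OF u _ p]) (intro pderivs.intros)
  show ?thesis unfolding cA_def by (rule px_of) (use nz in \<open>auto intro!: derivative_eq_intros du0 du1 simp: field_simps power2_eq_square\<close>)
qed

lemma c_pzcB:
  fixes x y z t :: real
  assumes u: "smooth_on4 S u" and p: "(x,y,z,t) \<in> S" and nz: "px u x y z t \<noteq> 0"
  shows "pz (cB u) x y z t = ((pz (px (px u))) x y z t * (px u) x y z t - (px (px u)) x y z t * (pz (px u)) x y z t) / ((px u) x y z t)^2"
proof -
  have du0: "((\<lambda>s. (px (px u)) x y s t) has_real_derivative pz (px (px u)) x y z t) (at z)"
    by (rule DZ[OF u _ p]) (intro pderivs.intros)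
  have du1: "((\<lambda>s. (px u) x y s t) has_real_derivative pz (px u) x y z t) (at z)"
    by (rule DZ[OF u _ p]) (intro pderivs.intros)
  show ?thesis unfolding cB_def by (rule pz_of) (use nz in \<open>auto intro!: derivative_eq_intros du0 du1 simp: field_simps power2_eq_square\<close>)
qed

lemma c_pxrA:
  fixes x y z t :: real
  assumes u: "smooth_on4 S u" and p: "(x,y,z,t) \<in> S" and nz: "px u x y z t \<noteq> 0"
    and U: "smooth_on4 S U"
  shows "px (rA u U) x y z t = (px (pt U)) x y z t - (((px (pt u)) x y z t * (px u) x y z t - (pt u) x y z t * (px (px u)) x y z t) / ((px u) x y z t)^2 * (px U) x y z t + (pt u) x y z t / (px u) x y z t * (px (px U)) x y z t)"
proof -
  have du0: "((\<lambda>s. (pt u) s y z t) has_real_derivative px (pt u) x y z t) (at x)"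
    by (rule DX[OF u _ p]) (intro pderivs.intros)
  have du1: "((\<lambda>s. (px u) s y z t) has_real_derivative px (px u) x y z t) (at x)"
    by (rule DX[OF u _ p]) (intro pderivs.intros)
  have dU0: "((\<lambda>s. (pt U) s y z t) has_real_derivative px (pt U) x y z t) (at x)"
    by (rule DX[OF U _ p]) (intro pderivs.intros)
  have dU1: "((\<lambda>s. (px U) s y z t) has_real_derivative px (px U) x y z t) (at x)"
    by (rule DX[OF U _ p]) (intro pderivs.intros)
  show ?thesis unfolding rA_def by (rule px_of) (use nz in \<open>auto intro!: derivative_eq_intros du0 du1 dU0 dU1 simp: field_simps power2_eq_square\<close>)
qed

lemma c_pzrB:
  fixes x y z t :: real
  assumes u: "smooth_on4 S u" and p: "(x,y,z,t) \<in> S" and nz: "px u x y z t \<noteq> 0"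
    and U: "smooth_on4 S U"
  shows "pz (rB u U) x y z t = (pz (py U)) x y z t - (((pz (py u)) x y z t * (px u) x y z t - (py u) x y z t * (pz (px u)) x y z t) / ((px u) x y z t)^2 * (px U) x y z t + (py u) x y z t / (px u) x y z t * (pz (px U)) x y z t)"
proof -
  have du0: "((\<lambda>s. (py u) x y s t) has_real_derivative pz (py u) x y z t) (at z)"
    by (rule DZ[OF u _ p]) (intro pderivs.intros)
  have du1: "((\<lambda>s. (px u) x y s t) has_real_derivative pz (px u) x y z t) (at z)"
    by (rule DZ[OF u _ p]) (intro pderivs.intros)
  have dU0: "((\<lambda>s. (py U) x y s t) has_real_derivative pz (py U) x y z t) (at z)"
    by (rule DZ[OF U _ p]) (intro pderivs.intros)
  have dU1: "((\<lambda>s. (px U) x y s t) has_real_derivative pz (px U) x y z t) (at z)"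
    by (rule DZ[OF U _ p]) (intro pderivs.intros)
  show ?thesis unfolding rB_def by (rule pz_of) (use nz in \<open>auto intro!: derivative_eq_intros du0 du1 dU0 dU1 simp: field_simps power2_eq_square\<close>)
qed

lemma c_lin:
  fixes x y z t :: real
  assumes u: "smooth_on4 S u" and p: "(x,y,z,t) \<in> S" and nz: "px u x y z t \<noteq> 0"
    and V: "smooth_on4 S V"
  shows "lin u V x y z t = (((pz (px u)) x y z t * (py V) x y z t + (px u) x y z t * (pz (py V)) x y z t - ((pz (py u)) x y z t * (px V) x y z t + (py u) x y z t * (pz (px V)) x y z t)) * ((px u) x y z t)^2 - ((px u) x y z t * (py V) x y z t - (py u) x y z t * (px V) x y z t) * (2 * (px u) x y z t * (pz (px u)) x y z t)) / (((px u) x y z t)^2)^2 - (((px (px u)) x y z t * (pt V) x y z t + (px u) x y z t * (px (pt V)) x y z t - ((px (pt u)) x y z t * (px V) x y z t + (pt u) x y z t * (px (px V)) x y z t)) * ((px u) x y z t)^2 - ((px u) x y z t * (pt V) x y z t - (pt u) x y z t * (px V) x y z t) * (2 * (px u) x y z t * (px (px u)) x y z t)) / (((px u) x y z t)^2)^2"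
proof -
  have du0: "((\<lambda>s. (px u) x y s t) has_real_derivative pz (px u) x y z t) (at z)"
    by (rule DZ[OF u _ p]) (intro pderivs.intros)
  have du1: "((\<lambda>s. (py u) x y s t) has_real_derivative pz (py u) x y z t) (at z)"
    by (rule DZ[OF u _ p]) (intro pderivs.intros)
  have du2: "((\<lambda>s. (px u) s y z t) has_real_derivative px (px u) x y z t) (at x)"
    by (rule DX[OF u _ p]) (intro pderivs.intros)
  have du3: "((\<lambda>s. (pt u) s y z t) has_real_derivative px (pt u) x y z t) (at x)"
    by (rule DX[OF u _ p]) (intro pderivs.intros)
  have dV0: "((\<lambda>s. (py V) x y s t) has_real_derivative pz (py V) x y z t) (at z)"
    by (rule DZ[OF V _ p]) (intro pderivs.intros)
  have dV1: "((\<lambda>s. (px V) x y s t) has_real_derivative pz (px V) x y z t) (at z)"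
    by (rule DZ[OF V _ p]) (intro pderivs.intros)
  have dV2: "((\<lambda>s. (pt V) s y z t) has_real_derivative px (pt V) x y z t) (at x)"
    by (rule DX[OF V _ p]) (intro pderivs.intros)
  have dV3: "((\<lambda>s. (px V) s y z t) has_real_derivative px (px V) x y z t) (at x)"
    by (rule DX[OF V _ p]) (intro pderivs.intros)
  show ?thesis unfolding lin_def by (rule arg_cong2[where f="(-)", OF pz_of px_of]) (use nz in \<open>auto intro!: derivative_eq_intros du0 du1 du2 du3 dV0 dV1 dV2 dV3 simp: field_simps power2_eq_square\<close>)
qed

lemma c_eqn:
  fixes x y z t :: real
  assumes u: "smooth_on4 S u" and p: "(x,y,z,t) \<in> S" and nz: "px u x y z t \<noteq> 0"
  shows "eqn u x y z t = ((pz (py u)) x y z t * (px u) x y z t - (py u) x y z t * (pz (px u)) x y z t) / ((px u) x y z t)^2 - ((px (pt u)) x y z t * (px u) x y z t - (pt u) x y z t * (px (px u)) x y z t) / ((px u) x y z t)^2"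
proof -
  have du0: "((\<lambda>s. (px u) x y s t) has_real_derivative pz (px u) x y z t) (at z)"
    by (rule DZ[OF u _ p]) (intro pderivs.intros)
  have du1: "((\<lambda>s. (py u) x y s t) has_real_derivative pz (py u) x y z t) (at z)"
    by (rule DZ[OF u _ p]) (intro pderivs.intros)
  have du2: "((\<lambda>s. (px u) s y z t) has_real_derivative px (px u) x y z t) (at x)"
    by (rule DX[OF u _ p]) (intro pderivs.intros)
  have du3: "((\<lambda>s. (pt u) s y z t) has_real_derivative px (pt u) x y z t) (at x)"
    by (rule DX[OF u _ p]) (intro pderivs.intros)
  show ?thesis unfolding eqn_def by (rule arg_cong2[where f="(-)", OF pz_of px_of]) (use nz in \<open>auto intro!: derivative_eq_intros du0 du1 du2 du3 simp: field_simps power2_eq_square\<close>)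
qed

lemma c_pxFE:
  fixes x y z t :: real
  assumes u: "smooth_on4 S u" and p: "(x,y,z,t) \<in> S" and nz: "px u x y z t \<noteq> 0"
  shows "px (FE u) x y z t = (((px (pz (py u))) x y z t * (px u) x y z t + (pz (py u)) x y z t * (px (px u)) x y z t - ((px (py u)) x y z t * (pz (px u)) x y z t + (py u) x y z t * (px (pz (px u))) x y z t)) * ((px u) x y z t)^2 - ((pz (py u)) x y z t * (px u) x y z t - (py u) x y z t * (pz (px u)) x y z t) * (2 * (px u) x y z t * (px (px u)) x y z t)) / (((px u) x y z t)^2)^2 - (((px (px (pt u))) x y z t * (px u) x y z t + (px (pt u)) x y z t * (px (px u)) x y z t - ((px (pt u)) x y z t * (px (px u)) x y z t + (pt u) x y z t * (px (px (px u))) x y z t)) * ((px u) x y z t)^2 - ((px (pt u)) x y z t * (px u) x y z t - (pt u) x y z t * (px (px u)) x y z t) * (2 * (px u) x y z t * (px (px u)) x y z t)) / (((px u) x y z t)^2)^2"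
proof -
  have du0: "((\<lambda>s. (pz (py u)) s y z t) has_real_derivative px (pz (py u)) x y z t) (at x)"
    by (rule DX[OF u _ p]) (intro pderivs.intros)
  have du1: "((\<lambda>s. (px u) s y z t) has_real_derivative px (px u) x y z t) (at x)"
    by (rule DX[OF u _ p]) (intro pderivs.intros)
  have du2: "((\<lambda>s. (py u) s y z t) has_real_derivative px (py u) x y z t) (at x)"
    by (rule DX[OF u _ p]) (intro pderivs.intros)
  have du3: "((\<lambda>s. (pz (px u)) s y z t) has_real_derivative px (pz (px u)) x y z t) (at x)"
    by (rule DX[OF u _ p]) (intro pderivs.intros)
  have du4: "((\<lambda>s. (px (pt u)) s y z t) has_real_derivative px (px (pt u)) x y z t) (at x)"
    by (rule DX[OF u _ p]) (intro pderivs.intros)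
  have du5: "((\<lambda>s. (pt u) s y z t) has_real_derivative px (pt u) x y z t) (at x)"
    by (rule DX[OF u _ p]) (intro pderivs.intros)
  have du6: "((\<lambda>s. (px (px u)) s y z t) has_real_derivative px (px (px u)) x y z t) (at x)"
    by (rule DX[OF u _ p]) (intro pderivs.intros)
  show ?thesis unfolding FE_def by (rule px_of) (use nz in \<open>auto intro!: derivative_eq_intros du0 du1 du2 du3 du4 du5 du6 simp: field_simps power2_eq_square\<close>)
qed

lemma c_Vxz:
  fixes x y z t :: real
  assumes u: "smooth_on4 S u" and p: "(x,y,z,t) \<in> S" and nz: "px u x y z t \<noteq> 0"
    and U: "smooth_on4 S U"
    and V: "smooth_on4 S V"
  shows "pz (GB u U V) x y z t = ((pz (px (px u))) x y z t * (px u) x y z t - (px (px u)) x y z t * (pz (px u)) x y z t) / ((px u) x y z t)^2 * V x y z t + (px (px u)) x y z t / (px u) x y z t * (pz V) x y z t + ((pz (py U)) x y z t - (((pz (py u)) x y z t * (px u) x y z t - (py u) x y z t * (pz (px u)) x y z t) / ((px u) x y z t)^2 * (px U) x y z t + (py u) x y z t / (px u) x y z t * (pz (px U)) x y z t))"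
proof -
  have du0: "((\<lambda>s. (px (px u)) x y s t) has_real_derivative pz (px (px u)) x y z t) (at z)"
    by (rule DZ[OF u _ p]) (intro pderivs.intros)
  have du1: "((\<lambda>s. (px u) x y s t) has_real_derivative pz (px u) x y z t) (at z)"
    by (rule DZ[OF u _ p]) (intro pderivs.intros)
  have du2: "((\<lambda>s. (py u) x y s t) has_real_derivative pz (py u) x y z t) (at z)"
    by (rule DZ[OF u _ p]) (intro pderivs.intros)
  have dU0: "((\<lambda>s. (py U) x y s t) has_real_derivative pz (py U) x y z t) (at z)"
    by (rule DZ[OF U _ p]) (intro pderivs.intros)
  have dU1: "((\<lambda>s. (px U) x y s t) has_real_derivative pz (px U) x y z t) (at z)"
    by (rule DZ[OF U _ p]) (intro pderivs.intros)
  have dV0: "((\<lambda>s. V x y s t) has_real_derivative pz V x y z t) (at z)"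
    by (rule DZ[OF V _ p]) (intro pderivs.intros)
  show ?thesis unfolding GB_def cB_def rB_def by (rule pz_of) (use nz in \<open>auto intro!: derivative_eq_intros du0 du1 du2 dU0 dU1 dV0 simp: field_simps power2_eq_square\<close>)
qed

lemma c_Vxx:
  fixes x y z t :: real
  assumes u: "smooth_on4 S u" and p: "(x,y,z,t) \<in> S" and nz: "px u x y z t \<noteq> 0"
    and U: "smooth_on4 S U"
    and V: "smooth_on4 S V"
  shows "px (GB u U V) x y z t = ((px (px (px u))) x y z t * (px u) x y z t - (px (px u)) x y z t * (px (px u)) x y z t) / ((px u) x y z t)^2 * V x y z t + (px (px u)) x y z t / (px u) x y z t * (px V) x y z t + ((px (py U)) x y z t - (((px (py u)) x y z t * (px u) x y z t - (py u) x y z t * (px (px u)) x y z t) / ((px u) x y z t)^2 * (px U) x y z t + (py u) x y z t / (px u) x y z t * (px (px U)) x y z t))"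
proof -
  have du0: "((\<lambda>s. (px (px u)) s y z t) has_real_derivative px (px (px u)) x y z t) (at x)"
    by (rule DX[OF u _ p]) (intro pderivs.intros)
  have du1: "((\<lambda>s. (px u) s y z t) has_real_derivative px (px u) x y z t) (at x)"
    by (rule DX[OF u _ p]) (intro pderivs.intros)
  have du2: "((\<lambda>s. (py u) s y z t) has_real_derivative px (py u) x y z t) (at x)"
    by (rule DX[OF u _ p]) (intro pderivs.intros)
  have dU0: "((\<lambda>s. (py U) s y z t) has_real_derivative px (py U) x y z t) (at x)"
    by (rule DX[OF U _ p]) (intro pderivs.intros)
  have dU1: "((\<lambda>s. (px U) s y z t) has_real_derivative px (px U) x y z t) (at x)"
    by (rule DX[OF U _ p]) (intro pderivs.intros)
  have dV0: "((\<lambda>s. V s y z t) has_real_derivative px V x y z t) (at x)"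
    by (rule DX[OF V _ p]) (intro pderivs.intros)
  show ?thesis unfolding GB_def cB_def rB_def by (rule px_of) (use nz in \<open>auto intro!: derivative_eq_intros du0 du1 du2 dU0 dU1 dV0 simp: field_simps power2_eq_square\<close>)
qed

lemma c_Vzy:
  fixes x y z t :: real
  assumes u: "smooth_on4 S u" and p: "(x,y,z,t) \<in> S" and nz: "px u x y z t \<noteq> 0"
    and U: "smooth_on4 S U"
    and V: "smooth_on4 S V"
  shows "py (GA u U V) x y z t = ((py (pz (px u))) x y z t * (px u) x y z t - (pz (px u)) x y z t * (py (px u)) x y z t) / ((px u) x y z t)^2 * V x y z t + (pz (px u)) x y z t / (px u) x y z t * (py V) x y z t + ((py (pt U)) x y z t - (((py (pt u)) x y z t * (px u) x y z t - (pt u) x y z t * (py (px u)) x y z t) / ((px u) x y z t)^2 * (px U) x y z t + (pt u) x y z t / (px u) x y z t * (py (px U)) x y z t))"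
proof -
  have du0: "((\<lambda>s. (pz (px u)) x s z t) has_real_derivative py (pz (px u)) x y z t) (at y)"
    by (rule DY[OF u _ p]) (intro pderivs.intros)
  have du1: "((\<lambda>s. (px u) x s z t) has_real_derivative py (px u) x y z t) (at y)"
    by (rule DY[OF u _ p]) (intro pderivs.intros)
  have du2: "((\<lambda>s. (pt u) x s z t) has_real_derivative py (pt u) x y z t) (at y)"
    by (rule DY[OF u _ p]) (intro pderivs.intros)
  have dU0: "((\<lambda>s. (pt U) x s z t) has_real_derivative py (pt U) x y z t) (at y)"
    by (rule DY[OF U _ p]) (intro pderivs.intros)
  have dU1: "((\<lambda>s. (px U) x s z t) has_real_derivative py (px U) x y z t) (at y)"
    by (rule DY[OF U _ p]) (intro pderivs.intros)
  have dV0: "((\<lambda>s. V x s z t) has_real_derivative py V x y z t) (at y)"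
    by (rule DY[OF V _ p]) (intro pderivs.intros)
  show ?thesis unfolding GA_def cA_def rA_def by (rule py_of) (use nz in \<open>auto intro!: derivative_eq_intros du0 du1 du2 dU0 dU1 dV0 simp: field_simps power2_eq_square\<close>)
qed

lemma c_Vxt:
  fixes x y z t :: real
  assumes u: "smooth_on4 S u" and p: "(x,y,z,t) \<in> S" and nz: "px u x y z t \<noteq> 0"
    and U: "smooth_on4 S U"
    and V: "smooth_on4 S V"
  shows "pt (GB u U V) x y z t = ((pt (px (px u))) x y z t * (px u) x y z t - (px (px u)) x y z t * (pt (px u)) x y z t) / ((px u) x y z t)^2 * V x y z t + (px (px u)) x y z t / (px u) x y z t * (pt V) x y z t + ((pt (py U)) x y z t - (((pt (py u)) x y z t * (px u) x y z t - (py u) x y z t * (pt (px u)) x y z t) / ((px u) x y z t)^2 * (px U) x y z t + (py u) x y z t / (px u) x y z t * (pt (px U)) x y z t))"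
proof -
  have du0: "((\<lambda>s. (px (px u)) x y z s) has_real_derivative pt (px (px u)) x y z t) (at t)"
    by (rule DT[OF u _ p]) (intro pderivs.intros)
  have du1: "((\<lambda>s. (px u) x y z s) has_real_derivative pt (px u) x y z t) (at t)"
    by (rule DT[OF u _ p]) (intro pderivs.intros)
  have du2: "((\<lambda>s. (py u) x y z s) has_real_derivative pt (py u) x y z t) (at t)"
    by (rule DT[OF u _ p]) (intro pderivs.intros)
  have dU0: "((\<lambda>s. (py U) x y z s) has_real_derivative pt (py U) x y z t) (at t)"
    by (rule DT[OF U _ p]) (intro pderivs.intros)
  have dU1: "((\<lambda>s. (px U) x y z s) has_real_derivative pt (px U) x y z t) (at t)"
    by (rule DT[OF U _ p]) (intro pderivs.intros)
  have dV0: "((\<lambda>s. V x y z s) has_real_derivative pt V x y z t) (at t)"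
    by (rule DT[OF V _ p]) (intro pderivs.intros)
  show ?thesis unfolding GB_def cB_def rB_def by (rule pt_of) (use nz in \<open>auto intro!: derivative_eq_intros du0 du1 du2 dU0 dU1 dV0 simp: field_simps power2_eq_square\<close>)
qed



lemma algA:
  fixes a ax ay az aT uy ut uyz uxt uxy uyt uty axx azx axz ayz atx uxyz uxxt Ux Uy UT Uyz Uxz Uxx Uxt Uxy Uyx Uyt Uty Utx V Vx Vy Vz Vt Vyz Vxz Vxx Vtx Vzy Vxt W :: real
  assumes nz: "a \<noteq> 0"
    and hL: "((az * Uy + a * Uyz - (uyz * Ux + uy * Uxz)) * (a)^2 - (a * Uy - uy * Ux) * (2 * a * az)) / ((a)^2)^2 - ((ax * UT + a * Uxt - (uxt * Ux + ut * Uxx)) * (a)^2 - (a * UT - ut * Ux) * (2 * a * ax)) / ((a)^2)^2 = 0"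
    and s6: "axz = azx"
  shows "((axz * a - az * ax) / (a)^2 * W + az / a * (ax / a * W + (Uy - uy / a * Ux)) + (Uxt - ((uxt * a - ut * ax) / (a)^2 * Ux + ut / a * Uxx))) - ((azx * a - ax * az) / (a)^2 * W + ax / a * (az / a * W + (UT - ut / a * Ux)) + (Uyz - ((uyz * a - uy * az) / (a)^2 * Ux + uy / a * Uxz))) = 0"
proof -
  have "((axz * a - az * ax) / (a)^2 * W + az / a * (ax / a * W + (Uy - uy / a * Ux)) + (Uxt - ((uxt * a - ut * ax) / (a)^2 * Ux + ut / a * Uxx))) - ((azx * a - ax * az) / (a)^2 * W + ax / a * (az / a * W + (UT - ut / a * Ux)) + (Uyz - ((uyz * a - uy * az) / (a)^2 * Ux + uy / a * Uxz))) = - a * (((az * Uy + a * Uyz - (uyz * Ux + uy * Uxz)) * (a)^2 - (a * Uy - uy * Ux) * (2 * a * az)) / ((a)^2)^2 - ((ax * UT + a * Uxt - (uxt * Ux + ut * Uxx)) * (a)^2 - (a * UT - ut * Ux) * (2 * a * ax)) / ((a)^2)^2)"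
    using nz unfolding s6 by (simp add: field_simps) algebra
  thus ?thesis by (simp only: hL mult_zero_right)
qed

lemma algB:
  fixes a ax ay az aT uy ut uyz uxt uxy uyt uty axx azx axz ayz atx uxyz uxxt Ux Uy UT Uyz Uxz Uxx Uxt Uxy Uyx Uyt Uty Utx V Vx Vy Vz Vt Vyz Vxz Vxx Vtx Vzy Vxt W :: real
  assumes nz: "a \<noteq> 0"
    and hE: "(uyz * a - uy * az) / (a)^2 - (uxt * a - ut * ax) / (a)^2 = 0"
    and hEX: "((uxyz * a + uyz * ax - (uxy * az + uy * axz)) * (a)^2 - (uyz * a - uy * az) * (2 * a * ax)) / ((a)^2)^2 - ((uxxt * a + uxt * ax - (uxt * ax + ut * axx)) * (a)^2 - (uxt * a - ut * ax) * (2 * a * ax)) / ((a)^2)^2 = 0"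
    and hL: "((az * Uy + a * Uyz - (uyz * Ux + uy * Uxz)) * (a)^2 - (a * Uy - uy * Ux) * (2 * a * az)) / ((a)^2)^2 - ((ax * UT + a * Uxt - (uxt * Ux + ut * Uxx)) * (a)^2 - (a * UT - ut * Ux) * (2 * a * ax)) / ((a)^2)^2 = 0"
    and hVx: "Vx = ax / a * V + (Uy - uy / a * Ux)"
    and hVz: "Vz = az / a * V + (UT - ut / a * Ux)"
    and hVxz: "Vxz = (azx * a - ax * az) / (a)^2 * V + ax / a * Vz + (Uyz - ((uyz * a - uy * az) / (a)^2 * Ux + uy / a * Uxz))"
    and hVxx: "Vxx = (axx * a - ax * ax) / (a)^2 * V + ax / a * Vx + (Uxy - ((uxy * a - uy * ax) / (a)^2 * Ux + uy / a * Uxx))"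
    and hVzy: "Vzy = (ayz * a - az * ay) / (a)^2 * V + az / a * Vy + (Uyt - ((uyt * a - ut * ay) / (a)^2 * Ux + ut / a * Uyx))"
    and hVxt: "Vxt = (atx * a - ax * aT) / (a)^2 * V + ax / a * Vt + (Uty - ((uty * a - uy * aT) / (a)^2 * Ux + uy / a * Utx))"
    and s1: "Vyz = Vzy" and s2: "Vtx = Vxt" and s3: "uxy = ay" and s4: "uxt = aT" and s5: "uyt = uty"
    and s6: "axz = azx" and s7: "uxyz = ayz" and s8: "uxxt = atx" and s9: "Uyx = Uxy" and s10: "Uty = Uyt" and s11: "Utx = Uxt"
  shows "((az * Vy + a * Vyz - (uyz * Vx + uy * Vxz)) * (a)^2 - (a * Vy - uy * Vx) * (2 * a * az)) / ((a)^2)^2 - ((ax * Vt + a * Vtx - (uxt * Vx + ut * Vxx)) * (a)^2 - (a * Vt - ut * Vx) * (2 * a * ax)) / ((a)^2)^2 = 0"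
proof -
  have "((az * Vy + a * Vyz - (uyz * Vx + uy * Vxz)) * (a)^2 - (a * Vy - uy * Vx) * (2 * a * az)) / ((a)^2)^2 - ((ax * Vt + a * Vtx - (uxt * Vx + ut * Vxx)) * (a)^2 - (a * Vt - ut * Vx) * (2 * a * ax)) / ((a)^2)^2 = (V / a) * (((uxyz * a + uyz * ax - (uxy * az + uy * axz)) * (a)^2 - (uyz * a - uy * az) * (2 * a * ax)) / ((a)^2)^2 - ((uxxt * a + uxt * ax - (uxt * ax + ut * axx)) * (a)^2 - (uxt * a - ut * ax) * (2 * a * ax)) / ((a)^2)^2) - ((Uy - uy / a * Ux) / a) * ((uyz * a - uy * az) / (a)^2 - (uxt * a - ut * ax) / (a)^2) - (uy / a) * (((az * Uy + a * Uyz - (uyz * Ux + uy * Uxz)) * (a)^2 - (a * Uy - uy * Ux) * (2 * a * az)) / ((a)^2)^2 - ((ax * UT + a * Uxt - (uxt * Ux + ut * Uxx)) * (a)^2 - (a * UT - ut * Ux) * (2 * a * ax)) / ((a)^2)^2)"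
    using nz unfolding hVx hVz hVxz hVxx s1 s2 hVzy hVxt s3 s4 s5 s6 s7 s8 s9 s10 s11
    apply (simp add: field_simps)
    by algebra
  thus ?thesis by (simp only: hE hEX hL mult_zero_right diff_zero)
qed

lemma pt4: "(\<And>x y z t. (x,y,z,t) \<in> S \<Longrightarrow> P (x,y,z,t)) \<Longrightarrow> \<forall>q\<in>S. P q"
  by (metis prod_cases4)

theorem mainTheorem1:
  fixes S :: "(real \<times> real \<times> real \<times> real) set"
    and u U :: "real \<Rightarrow> real \<Rightarrow> real \<Rightarrow> real \<Rightarrow> real"
  assumes S_open: "open S"
    and u_smooth: "smooth_on4 S u"
    and U_smooth: "smooth_on4 S U"
    and ux_nz: "\<forall>p\<in>S. uncurry4 (px u) p \<noteq> 0"
    and u_eq: "\<forall>p\<in>S. uncurry4 (eqn u) p = 0"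
    and U_sym: "\<forall>p\<in>S. uncurry4 (lin u U) p = 0"
  shows "(\<forall>p\<in>S. \<forall>W::real. uncurry4 (compat u U W) p = 0)
       \<and> (\<forall>Ut. smooth_on4 S Ut
              \<longrightarrow> (\<forall>p\<in>S. uncurry4 (pz Ut) p - uncurry4 (cA u) p * uncurry4 Ut p
                            = uncurry4 (pt U) p - uncurry4 (pt u) p / uncurry4 (px u) p * uncurry4 (px U) p)
              \<longrightarrow> (\<forall>p\<in>S. uncurry4 (px Ut) p - uncurry4 (cB u) p * uncurry4 Ut p
                            = uncurry4 (py U) p - uncurry4 (py u) p / uncurry4 (px u) p * uncurry4 (px U) p)
              \<longrightarrow> (\<forall>p\<in>S. uncurry4 (lin u Ut) p = 0))"
proof -
  have nz: "\<And>x y z t. (x,y,z,t) \<in> S \<Longrightarrow> px u x y z t \<noteq> 0"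
    using ux_nz by (force simp: uncurry4_def)
  have Lz: "\<And>x y z t. (x,y,z,t) \<in> S \<Longrightarrow> lin u U x y z t = 0"
    using U_sym by (force simp: uncurry4_def)
  have Ez: "\<And>x y z t. (x,y,z,t) \<in> S \<Longrightarrow> eqn u x y z t = 0"
    using u_eq by (force simp: uncurry4_def)
  have mpx: "px u \<in> pderivs u" "py u \<in> pderivs u" "pt u \<in> pderivs u" by (intro pderivs.intros)+
  note sx = smooth_sub[OF u_smooth mpx(1)]
  note sy = smooth_sub[OF u_smooth mpx(2)]
  note st = smooth_sub[OF u_smooth mpx(3)]
  have A: "\<forall>p\<in>S. \<forall>W::real. uncurry4 (compat u U W) p = 0"
  proof (rule pt4)
    fix x y z t assume p: "(x,y,z,t) \<in> S"
    note nzp = nz[OF p]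
    have L: "lin u U x y z t = 0" by (rule Lz[OF p])
    note L' = L[unfolded c_lin[OF u_smooth p nzp U_smooth]]
    have sym: "px (pz (px u)) x y z t = pz (px (px u)) x y z t"
      using sch_xz[OF S_open sx p] by simp
    show "\<forall>W. uncurry4 (compat u U W) (x,y,z,t) = 0"
    proof
      fix W :: real
      show "uncurry4 (compat u U W) (x,y,z,t) = 0"
        unfolding uncurry4_def fst_conv snd_conv compat_def
        apply (simp only: c_pxcA[OF u_smooth p nzp] c_pzcB[OF u_smooth p nzp]
            c_pxrA[OF u_smooth p nzp U_smooth] c_pzrB[OF u_smooth p nzp U_smooth])
        unfolding cA_def cB_def rA_def rB_def
        by (rule algA[OF nzp L' sym])
    qed
  qed
  have B: "\<forall>Ut. smooth_on4 S Ut
              \<longrightarrow> (\<forall>p\<in>S. uncurry4 (pz Ut) p - uncurry4 (cA u) p * uncurry4 Ut p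
                            = uncurry4 (pt U) p - uncurry4 (pt u) p / uncurry4 (px u) p * uncurry4 (px U) p)
              \<longrightarrow> (\<forall>p\<in>S. uncurry4 (px Ut) p - uncurry4 (cB u) p * uncurry4 Ut p
                            = uncurry4 (py U) p - uncurry4 (py u) p / uncurry4 (px u) p * uncurry4 (px U) p)
              \<longrightarrow> (\<forall>p\<in>S. uncurry4 (lin u Ut) p = 0)"
  proof (intro allI impI)
    fix Ut assume Vs: "smooth_on4 S Ut"
      and H1: "\<forall>p\<in>S. uncurry4 (pz Ut) p - uncurry4 (cA u) p * uncurry4 Ut p
                            = uncurry4 (pt U) p - uncurry4 (pt u) p / uncurry4 (px u) p * uncurry4 (px U) p"
      and H2: "\<forall>p\<in>S. uncurry4 (px Ut) p - uncurry4 (cB u) p * uncurry4 Ut p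
                            = uncurry4 (py U) p - uncurry4 (py u) p / uncurry4 (px u) p * uncurry4 (px U) p"
    have T1: "\<forall>q\<in>S. uncurry4 (pz Ut) q = uncurry4 (GA u U Ut) q"
    proof (rule pt4)
      fix x y z t assume p: "(x,y,z,t) \<in> S"
      show "uncurry4 (pz Ut) (x,y,z,t) = uncurry4 (GA u U Ut) (x,y,z,t)"
        using H1[rule_format, OF p] unfolding uncurry4_def GA_def rA_def by simp
    qed
    have T2: "\<forall>q\<in>S. uncurry4 (px Ut) q = uncurry4 (GB u U Ut) q"
    proof (rule pt4)
      fix x y z t assume p: "(x,y,z,t) \<in> S"
      show "uncurry4 (px Ut) (x,y,z,t) = uncurry4 (GB u U Ut) (x,y,z,t)"
        using H2[rule_format, OF p] unfolding uncurry4_def GB_def rB_def by simp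
    qed
    have FE0: "\<forall>q\<in>S. uncurry4 (FE u) q = uncurry4 (\<lambda>x y z t. 0) q"
    proof (rule pt4)
      fix x y z t assume p: "(x,y,z,t) \<in> S"
      have "FE u x y z t = eqn u x y z t"
        unfolding c_eqn[OF u_smooth p nz[OF p]] FE_def by simp
      thus "uncurry4 (FE u) (x,y,z,t) = uncurry4 (\<lambda>x y z t. 0) (x,y,z,t)"
        using Ez[OF p] by (simp add: uncurry4_def)
    qed
    have Sxy: "\<forall>q\<in>S. uncurry4 (px (py u)) q = uncurry4 (py (px u)) q"
      by (rule pt4) (simp add: uncurry4_def sch_xy[OF S_open u_smooth])
    have Sxt: "\<forall>q\<in>S. uncurry4 (px (pt u)) q = uncurry4 (pt (px u)) q"
      by (rule pt4) (simp add: uncurry4_def sch_xt[OF S_open u_smooth])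
    show "\<forall>p\<in>S. uncurry4 (lin u Ut) p = 0"
    proof (rule pt4)
      fix x y z t assume p: "(x,y,z,t) \<in> S"
      note nzp = nz[OF p]
      note hE = Ez[OF p, unfolded c_eqn[OF u_smooth p nzp]]
      have "px (FE u) x y z t = px (\<lambda>x y z t. 0) x y z t" by (rule TX[OF S_open FE0 p])
      also have "\<dots> = 0" by (rule px_of) simp
      finally have hEX0: "px (FE u) x y z t = 0" .
      note hEX = hEX0[unfolded c_pxFE[OF u_smooth p nzp]]
      note hL = Lz[OF p, unfolded c_lin[OF u_smooth p nzp U_smooth]]
      have hVx: "px Ut x y z t = px (px u) x y z t / px u x y z t * Ut x y z t + (py U x y z t - py u x y z t / px u x y z t * px U x y z t)"
        using T2 p unfolding uncurry4_def GB_def cB_def rB_def by force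
      have hVz: "pz Ut x y z t = pz (px u) x y z t / px u x y z t * Ut x y z t + (pt U x y z t - pt u x y z t / px u x y z t * px U x y z t)"
        using T1 p unfolding uncurry4_def GA_def cA_def rA_def by force
      note hVxz = TZ[OF S_open T2 p, unfolded c_Vxz[OF u_smooth p nzp U_smooth Vs]]
      note hVxx = TX[OF S_open T2 p, unfolded c_Vxx[OF u_smooth p nzp U_smooth Vs]]
      note hVzy = TY[OF S_open T1 p, unfolded c_Vzy[OF u_smooth p nzp U_smooth Vs]]
      note hVxt = TT[OF S_open T2 p, unfolded c_Vxt[OF u_smooth p nzp U_smooth Vs]]
      have s1: "pz (py Ut) x y z t = py (pz Ut) x y z t" by (rule sch_yz[OF S_open Vs p])
      have s2: "px (pt Ut) x y z t = pt (px Ut) x y z t" by (rule sch_xt[OF S_open Vs p, symmetric])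
      have s3: "px (py u) x y z t = py (px u) x y z t" by (rule sch_xy[OF S_open u_smooth p, symmetric])
      have s4: "px (pt u) x y z t = pt (px u) x y z t" by (rule sch_xt[OF S_open u_smooth p, symmetric])
      have s5: "py (pt u) x y z t = pt (py u) x y z t" by (rule sch_yt[OF S_open u_smooth p, symmetric])
      have s6: "px (pz (px u)) x y z t = pz (px (px u)) x y z t" by (rule sch_xz[OF S_open sx p, symmetric])
      have a1: "pz (px (py u)) x y z t = px (pz (py u)) x y z t" by (rule sch_xz[OF S_open sy p])
      have a2: "pz (px (py u)) x y z t = pz (py (px u)) x y z t" by (rule TZ[OF S_open Sxy p])
      have a3: "pz (py (px u)) x y z t = py (pz (px u)) x y z t" by (rule sch_yz[OF S_open sx p])
      have s7: "px (pz (py u)) x y z t = py (pz (px u)) x y z t" using a1 a2 a3 by simp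
      have b1: "px (px (pt u)) x y z t = px (pt (px u)) x y z t" by (rule TX[OF S_open Sxt p])
      have b2: "pt (px (px u)) x y z t = px (pt (px u)) x y z t" by (rule sch_xt[OF S_open sx p])
      have s8: "px (px (pt u)) x y z t = pt (px (px u)) x y z t" using b1 b2 by simp
      have s9: "py (px U) x y z t = px (py U) x y z t" by (rule sch_xy[OF S_open U_smooth p])
      have s10: "pt (py U) x y z t = py (pt U) x y z t" by (rule sch_yt[OF S_open U_smooth p])
      have s11: "pt (px U) x y z t = px (pt U) x y z t" by (rule sch_xt[OF S_open U_smooth p])
      show "uncurry4 (lin u Ut) (x,y,z,t) = 0"
        unfolding uncurry4_def fst_conv snd_conv c_lin[OF u_smooth p nzp Vs]
        by (rule algB[OF nzp hE hEX hL hVx hVz hVxz hVxx hVzy hVxt s1 s2 s3 s4 s5 s6 s7 s8 s9 s10 s11])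
    qed
  qed
  show ?thesis using A B by blast
qed

end
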